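(* Let $N\ge 1$ and $1\le K\le N$ be integers, let $\lambda_s>0$, $c>0$, and let $T_{\mathrm D}>c$ be a fixed deadline. Let $T_1,\dots,T_N$ be i.i.d. with CDF $F(t)=1-e^{-\lambda_s(t-c)}$ for $t>c$ (and $0$ for $t\le c$), let $T_N(h)$ denote the $h$-th smallest of $T_1,\dots,T_N$, and fix $n\in\{1,\dots,N\}$. Let $\mathcal C_{\mathrm F}=\{T_n>\min\{T_{\mathrm D},T_N(K)\}\}$. Then $$\mathbb P\big(T_{\mathrm D}<T_N(K)\,\big|\,\mathcal C_{\mathrm F}\big)=\frac{(N-K)\mathcal Z_K+\sum_{h=1}^{K}\mathcal Z_h}{N e^{-\lambda_s(T_{\mathrm D}-c)}+(N-K)-\sum_{h=K+1}^{N}\mathcal Z_h},$$ where for $1\le h\le N$, $\mathcal Z_h=\sum_{i=0}^{h-1}B_{h,i}\frac{V_{h,i}}{U_{h,i}}$ with $B_{h,i}=h\binom{N}{h}\binom{h-1}{i}(-1)^i$, $U_{h,i}=N-h+1+i$, $V_{h,i}=e^{-\lambda_sU_{h,i}(T_{\mathrm D}-c)}$ (so that $\mathcal Z_h=\mathbb P(T_{\mathrm D}<T_N(h))$).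
   Context: Model: an access point multicasts a status update to $N$ devices with i.i.d. shifted-exponential delivery times $T_1,\dots,T_N$; transmission terminates at $\min\{T_{\mathrm D},T_N(K)\}$. $\mathcal C_{\mathrm F}$ is the event that device $n$ fails to receive the update; the claimed quantity (denoted $\mathbb P(\mathcal C_{\mathrm F,2})$ in the paper) is the probability that the deadline expired before $K$ devices received the update, given that device $n$ failed. *)

theory Defs
  imports "HOL-Probability.Probability"
begin

definition order_stat :: "nat \<Rightarrow> (nat \<Rightarrow> real) \<Rightarrow> nat \<Rightarrow> real" where
  "order_stat N t h = sort (map t [1..<N+1]) ! (h - 1)"

definition shexp_cdf :: "real \<Rightarrow> real \<Rightarrow> real \<Rightarrow> real" where
  "shexp_cdf lam c t = (if t \<le> c then 0 else 1 - exp (- lam * (t - c)))"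

definition Bcoef :: "nat \<Rightarrow> nat \<Rightarrow> nat \<Rightarrow> real" where
  "Bcoef N h i = real h * real (N choose h) * real ((h - 1) choose i) * (-1) ^ i"

definition Ucoef :: "nat \<Rightarrow> nat \<Rightarrow> nat \<Rightarrow> real" where
  "Ucoef N h i = real N - real h + 1 + real i"

definition Vcoef :: "nat \<Rightarrow> real \<Rightarrow> real \<Rightarrow> real \<Rightarrow> nat \<Rightarrow> nat \<Rightarrow> real" where
  "Vcoef N lam c TD h i = exp (- lam * Ucoef N h i * (TD - c))"

definition Zcoef :: "nat \<Rightarrow> real \<Rightarrow> real \<Rightarrow> real \<Rightarrow> nat \<Rightarrow> real" where
  "Zcoef N lam c TD h = (\<Sum>i = 0..h - 1. Bcoef N h i * Vcoef N lam c TD h i / Ucoef N h i)"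

end

theory Submission
  imports Defs
begin

lemma binom_shift: "h < N \<Longrightarrow> real (N - h) * real (N choose h) = real (Suc h) * real (N choose Suc h)"
proof -
  assume "h < N"
  then obtain n' where N: "N = Suc n'" by (cases N) auto
  have a: "(N - h) * (N choose h) = N * ((N - 1) choose h)" by (rule binomial_absorb_comp)
  have b: "Suc h * (Suc n' choose Suc h) = Suc n' * (n' choose h)" by (rule Suc_times_binomial)
  have "(N - h) * (N choose h) = Suc h * (N choose Suc h)" using a b N by simp
  then show ?thesis by (metis of_nat_mult)
qed

lemma F_deriv0:
  fixes x :: real
  shows "1 \<le> h \<Longrightarrow> h \<le> N \<Longrightarrow> ((\<lambda>x. \<Sum>k<h. real (N choose k) * (1-x)^k * x^(N-k)) has_real_derivative
          real h * real (N choose h) * (1-x)^(h-1) * x^(N-h)) (at x)"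
proof (induction h)
  case 0
  then show ?case by simp
next
  case (Suc h)
  show ?case
  proof (cases "h = 0")
    case True
    then show ?thesis by (auto intro!: derivative_eq_intros)
  next
    case False
    then have IH: "((\<lambda>x. \<Sum>k<h. real (N choose k) * (1-x)^k * x^(N-k)) has_real_derivative
          real h * real (N choose h) * (1-x)^(h-1) * x^(N-h)) (at x)" using Suc by simp
  have t: "((\<lambda>x. real (N choose h) * (1-x)^h * x^(N-h)) has_real_derivative
     real (N choose h) * ((real h * (1-x)^(h-1) * (-1)) * x^(N-h) + (1-x)^h * (real (N-h) * x^(N-h-1)))) (at x)"
    apply (auto intro!: derivative_eq_intros)
    by (simp add: right_diff_distrib mult_ac)
  have "((\<lambda>x. (\<Sum>k<h. real (N choose k) * (1-x)^k * x^(N-k)) + real (N choose h) * (1-x)^h * x^(N-h)) has_real_derivative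
     real h * real (N choose h) * (1-x)^(h-1) * x^(N-h) + real (N choose h) * ((real h * (1-x)^(h-1) * (-1)) * x^(N-h) + (1-x)^h * (real (N-h) * x^(N-h-1)))) (at x)"
    by (rule DERIV_add[OF IH t])
  moreover have "real h * real (N choose h) * (1-x)^(h-1) * x^(N-h) + real (N choose h) * ((real h * (1-x)^(h-1) * (-1)) * x^(N-h) + (1-x)^h * (real (N-h) * x^(N-h-1)))
     = real (Suc h) * real (N choose Suc h) * (1-x)^(Suc h-1) * x^(N-Suc h)"
  proof -
    obtain h' where h': "h = Suc h'" using False by (cases h) auto
    obtain m where m: "N - h = Suc m" using Suc.prems by (metis Suc_diff_Suc Suc_le_lessD)
    have m2: "N - Suc h = m" using m by simp
    have "real h * real (N choose h) * (1-x)^(h-1) * x^(N-h) + real (N choose h) * ((real h * (1-x)^(h-1) * (-1)) * x^(N-h) + (1-x)^h * (real (N-h) * x^(N-h-1)))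
      = real (N-h) * real (N choose h) * (1-x)^h * x^(N-h-1)"
      unfolding h' m by (simp only: power_Suc2 diff_Suc_1) (simp add: algebra_simps)
    also have "\<dots> = real (Suc h) * real (N choose Suc h) * (1-x)^(Suc h-1) * x^(N-Suc h)"
      using binom_shift[of h N] Suc.prems m m2 by simp
    finally show ?thesis .
  qed
  ultimately show ?thesis by simp
  qed
qed

lemma F_deriv:
  fixes x :: real
  assumes "1 \<le> h" "h \<le> N"
  shows "((\<lambda>x. \<Sum>k<h. real (N choose k) * (1-x)^k * x^(N-k)) has_real_derivative
          real h * real (N choose h) * (1-x)^(h-1) * x^(N-h)) (at x)"
  using F_deriv0 assms by blast

lemma term_deriv:
  fixes x C :: real
  shows "((\<lambda>x. C * x^(Suc m) / real (Suc m)) has_real_derivative C * x^m) (at x)"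
proof -
  have "((\<lambda>x. C * x^(Suc m) / real (Suc m)) has_real_derivative C * (real (Suc m) * x^(Suc m - Suc 0)) / real (Suc m)) (at x)"
    by (intro DERIV_cdivide DERIV_cmult DERIV_pow)
  then show ?thesis by simp
qed

lemma G_deriv:
  fixes x :: real
  assumes "1 \<le> h" "h \<le> N"
  shows "((\<lambda>x. \<Sum>i=0..h-1. real h * real (N choose h) * real ((h-1) choose i) * (-1)^i * x^(N-h+1+i) / real (N-h+1+i)) has_real_derivative
          real h * real (N choose h) * (1-x)^(h-1) * x^(N-h)) (at x)"
proof -
  have eq: "\<And>i. N-h+1+i = Suc (N-h+i)" by simp
  have d: "((\<lambda>x. \<Sum>i=0..h-1. real h * real (N choose h) * real ((h-1) choose i) * (-1)^i * x^(N-h+1+i) / real (N-h+1+i)) has_real_derivative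
          (\<Sum>i=0..h-1. real h * real (N choose h) * real ((h-1) choose i) * (-1)^i * x^(N-h+i))) (at x)"
    unfolding eq by (intro DERIV_sum term_deriv)
  have "(\<Sum>i=0..h-1. real h * real (N choose h) * real ((h-1) choose i) * (-1)^i * x^(N-h+i))
     = (\<Sum>i=0..h-1. real h * real (N choose h) * x^(N-h) * (real ((h-1) choose i) * (-x)^i * 1^(h-1-i)))"
  proof -
    have m: "\<And>i. (-x)^i = (-1)^i * x^i" by (metis mult_minus1 power_mult_distrib)
    show ?thesis by (intro sum.cong refl) (simp add: power_add m mult_ac)
  qed
  also have "\<dots> = real h * real (N choose h) * x^(N-h) * (\<Sum>i\<le>h-1. real ((h-1) choose i) * (-x)^i * 1^(h-1-i))"
    by (simp only: sum_distrib_left atLeast0AtMost)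
  also have "\<dots> = real h * real (N choose h) * x^(N-h) * (-x + 1)^(h-1)"
    by (simp only: binomial_ring)
  also have "\<dots> = real h * real (N choose h) * (1-x)^(h-1) * x^(N-h)"
    by (simp add: mult_ac)
  finally show ?thesis using d by simp
qed

lemma Z_poly:
  fixes x :: real
  assumes "1 \<le> h" "h \<le> N"
  shows "(\<Sum>i=0..h-1. real h * real (N choose h) * real ((h-1) choose i) * (-1)^i * x^(N-h+1+i) / real (N-h+1+i))
       = (\<Sum>k<h. real (N choose k) * (1-x)^k * x^(N-k))"
proof -
  define D where "D = (\<lambda>x::real. (\<Sum>i=0..h-1. real h * real (N choose h) * real ((h-1) choose i) * (-1)^i * x^(N-h+1+i) / real (N-h+1+i))
       - (\<Sum>k<h. real (N choose k) * (1-x)^k * x^(N-k)))"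
  have "\<forall>y. (D has_real_derivative 0) (at y)"
  proof
    fix y :: real
    show "(D has_real_derivative 0) (at y)"
      unfolding D_def using DERIV_diff[OF G_deriv[OF assms, of y] F_deriv[OF assms, of y]] by simp
  qed
  then have "D x = D 0" by (rule DERIV_isconst_all)
  moreover have "D 0 = 0" using assms unfolding D_def by (auto intro!: sum.neutral)
  ultimately show ?thesis unfolding D_def by simp
qed

lemma sorted_nth_filter:
  fixes xs :: "real list"
  assumes "sorted xs" "1 \<le> h" "h \<le> length xs" "\<And>x y. P y \<Longrightarrow> x \<le> y \<Longrightarrow> P x"
  shows "P (xs ! (h-1)) \<longleftrightarrow> h \<le> length (filter P xs)"
  using assms
proof (induction xs arbitrary: h)
  case Nil
  then show ?case by simp
next
  case (Cons x xs)
  have sx: "sorted xs" and mn: "\<forall>y\<in>set xs. x \<le> y" using Cons.prems(1) by auto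
  show ?case
  proof (cases "h = 1")
    case True
    show ?thesis
    proof (cases "P x")
      case True
      then show ?thesis using \<open>h = 1\<close> by simp
    next
      case False
      have "filter P xs = []" using False mn Cons.prems(4) by (auto simp: filter_empty_conv)
      then show ?thesis using False \<open>h = 1\<close> by simp
    qed
  next
    case False
    then obtain h' where h: "h = Suc h'" "1 \<le> h'" using Cons.prems(2) by (cases h) auto
    have IH: "P (xs ! (h'-1)) \<longleftrightarrow> h' \<le> length (filter P xs)"
      using Cons.IH[OF sx h(2)] Cons.prems h by simp
    have e: "(x # xs) ! (h - 1) = xs ! (h' - 1)" using h by (cases h') auto
    show ?thesis
    proof (cases "P x")
      case True
      then show ?thesis using IH e h by simp
    next
      case False
      have "filter P xs = []" using False mn Cons.prems(4) by (auto simp: filter_empty_conv)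
      moreover have "\<not> P (xs ! (h'-1))"
      proof
        assume a: "P (xs ! (h'-1))"
        have "xs ! (h'-1) \<in> set xs" using h Cons.prems(3) by (intro nth_mem) simp
        then show False using a False mn Cons.prems(4) by blast
      qed
      ultimately show ?thesis using False e h by simp
    qed
  qed
qed

lemma order_stat_iff:
  assumes "1 \<le> h" "h \<le> N" "\<And>x y. P y \<Longrightarrow> x \<le> y \<Longrightarrow> P x"
  shows "P (order_stat N v h) \<longleftrightarrow> h \<le> card {i\<in>{1..N}. P (v i)}"
proof -
  let ?L = "map v [1..<N+1]"
  have "P (order_stat N v h) \<longleftrightarrow> h \<le> length (filter P (sort ?L))"
    unfolding order_stat_def using assms by (intro sorted_nth_filter) auto
  also have "length (filter P (sort ?L)) = length (filter P ?L)"
    by (simp add: filter_sort)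
  also have "\<dots> = length (filter (P \<circ> v) [1..<N+1])" by (simp add: filter_map)
  also have "\<dots> = card {i\<in>{1..N}. P (v i)}"
    by (subst distinct_length_filter) (auto intro!: arg_cong[where f=card])
  finally show ?thesis .
qed

lemma order_stat_mem:
  assumes "1 \<le> h" "h \<le> N"
  shows "\<exists>j\<in>{1..N}. v j = order_stat N v h"
proof -
  let ?L = "map v [1..<N+1]"
  have "sort ?L ! (h-1) \<in> set (sort ?L)" using assms by (intro nth_mem) simp
  then have "order_stat N v h \<in> set ?L" unfolding order_stat_def by (simp only: set_sort)
  then obtain j where j: "j \<in> set [1..<N+1]" "order_stat N v h = v j" by auto
  then have "j \<in> {1..N}" by auto
  then show ?thesis using j by metis
qed

lemma A_iff:
  assumes "1 \<le> K" "K \<le> N"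
  shows "TD < order_stat N v K \<longleftrightarrow> card {i\<in>{1..N}. v i \<le> TD} < K"
  using order_stat_iff[OF assms, of "\<lambda>y. y \<le> TD" v] by force

lemma CF_iff:
  assumes "1 \<le> K" "K \<le> N"
  shows "min TD (order_stat N v K) < a \<longleftrightarrow> TD < a \<or> K \<le> card {i\<in>{1..N}. v i < a}"
  using order_stat_iff[OF assms, of "\<lambda>y. y < a" v] by auto

lemma count_notCF:
  assumes "1 \<le> K" "K \<le> N" "inj_on v {1..N}"
  shows "card {n\<in>{1..N}. \<not> (min TD (order_stat N v K) < v n)} = min (card {i\<in>{1..N}. v i \<le> TD}) K"
proof -
  let ?os = "order_stat N v K"
  let ?X = "card {i\<in>{1..N}. v i \<le> TD}"
  show ?thesis
  proof (cases "?X < K")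
    case True
    then have "TD < ?os" using A_iff[OF assms(1,2)] by blast
    then have "{n\<in>{1..N}. \<not> (min TD ?os < v n)} = {i\<in>{1..N}. v i \<le> TD}" by auto
    then show ?thesis using True by simp
  next
    case False
    then have le: "?os \<le> TD" using A_iff[OF assms(1,2), of TD v] by linarith
    then have eq: "{n\<in>{1..N}. \<not> (min TD ?os < v n)} = {i\<in>{1..N}. v i \<le> ?os}" by auto
    have ge: "K \<le> card {i\<in>{1..N}. v i \<le> ?os}"
      using order_stat_iff[OF assms(1,2), of "\<lambda>y. y \<le> ?os" v] by simp
    have lt: "\<not> K \<le> card {i\<in>{1..N}. v i < ?os}"
      using order_stat_iff[OF assms(1,2), of "\<lambda>y. y < ?os" v] by simp
    obtain j where j: "j \<in> {1..N}" "v j = ?os" using order_stat_mem[OF assms(1,2), of v] by auto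
    have "{i\<in>{1..N}. v i \<le> ?os} \<subseteq> insert j {i\<in>{1..N}. v i < ?os}"
    proof
      fix i assume i: "i \<in> {i\<in>{1..N}. v i \<le> ?os}"
      show "i \<in> insert j {i\<in>{1..N}. v i < ?os}"
      proof (cases "v i = ?os")
        case True
        have vij: "v i = v j" by (simp only: True j(2))
        then have "i = j" using inj_onD[OF assms(3) vij] i j(1) by blast
        then show ?thesis by simp
      next
        case False
        then show ?thesis using i by auto
      qed
    qed
    then have "card {i\<in>{1..N}. v i \<le> ?os} \<le> card (insert j {i\<in>{1..N}. v i < ?os})"
      by (intro card_mono) simp_all
    also have "\<dots> \<le> Suc (card {i\<in>{1..N}. v i < ?os})" by (simp add: card_insert_if)
    finally have "card {i\<in>{1..N}. v i \<le> ?os} = K" using ge lt by linarith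
    then show ?thesis using eq False by simp
  qed
qed

lemma count_ACF:
  assumes "1 \<le> K" "K \<le> N"
  shows "card {n\<in>{1..N}. TD < order_stat N v K \<and> min TD (order_stat N v K) < v n}
       = (if card {i\<in>{1..N}. v i \<le> TD} < K then N - card {i\<in>{1..N}. v i \<le> TD} else 0)"
proof (cases "card {i\<in>{1..N}. v i \<le> TD} < K")
  case True
  then have "TD < order_stat N v K" using A_iff[OF assms] by blast
  then have "{n\<in>{1..N}. TD < order_stat N v K \<and> min TD (order_stat N v K) < v n} = {1..N} - {i\<in>{1..N}. v i \<le> TD}"
    by auto
  moreover have "card ({1..N} - {i\<in>{1..N}. v i \<le> TD}) = card {1..N} - card {i\<in>{1..N}. v i \<le> TD}"
    by (rule card_Diff_subset) auto
  ultimately show ?thesis using True by simp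
next
  case False
  then show ?thesis using A_iff[OF assms, of TD v] by auto
qed

lemma Z_eq:
  assumes "1 \<le> h" "h \<le> N"
  shows "Zcoef N lam c TD h = (\<Sum>k<h. real (N choose k) * (1 - exp (- lam * (TD - c)))^k * exp (- lam * (TD - c))^(N-k))"
proof -
  let ?q = "exp (- lam * (TD - c))"
  have "Zcoef N lam c TD h = (\<Sum>i=0..h-1. real h * real (N choose h) * real ((h-1) choose i) * (-1)^i * ?q^(N-h+1+i) / real (N-h+1+i))"
    unfolding Zcoef_def
  proof (intro sum.cong refl)
    fix i assume "i \<in> {0..h-1}"
    have U: "Ucoef N h i = real (N-h+1+i)" unfolding Ucoef_def using assms by (simp add: of_nat_diff)
    have V: "Vcoef N lam c TD h i = ?q^(N-h+1+i)"
    proof -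
      have "Vcoef N lam c TD h i = exp (real (N-h+1+i) * (- lam * (TD - c)))"
        unfolding Vcoef_def U by (simp add: mult_ac)
      also have "\<dots> = ?q^(N-h+1+i)" by (rule exp_of_nat_mult)
      finally show ?thesis .
    qed
    show "Bcoef N h i * Vcoef N lam c TD h i / Ucoef N h i = real h * real (N choose h) * real ((h-1) choose i) * (-1)^i * ?q^(N-h+1+i) / real (N-h+1+i)"
      unfolding U V Bcoef_def by simp
  qed
  also have "\<dots> = (\<Sum>k<h. real (N choose k) * (1-?q)^k * ?q^(N-k))"
    by (rule Z_poly[OF assms])
  finally show ?thesis .
qed

lemma binom_sum1:
  fixes q :: real
  shows "(\<Sum>k\<le>N. real (N choose k) * (1-q)^k * q^(N-k)) = 1"
proof -
  have "((1-q) + q)^N = (\<Sum>k\<le>N. real (N choose k) * (1-q)^k * q^(N-k))" by (rule binomial_ring)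
  then show ?thesis by simp
qed

lemma binom_sumk:
  fixes q :: real
  shows "(\<Sum>k\<le>N. real k * (real (N choose k) * (1-q)^k * q^(N-k))) = real N * (1-q)"
proof (cases N)
  case 0
  then show ?thesis by simp
next
  case (Suc n)
  have "(\<Sum>k\<le>Suc n. real k * (real (Suc n choose k) * (1-q)^k * q^(Suc n-k)))
      = (\<Sum>k\<le>n. real (Suc k) * (real (Suc n choose Suc k) * (1-q)^(Suc k) * q^(Suc n- Suc k)))"
    by (subst sum.atMost_Suc_shift) simp
  also have "\<dots> = (\<Sum>k\<le>n. real (Suc n) * (1-q) * (real (n choose k) * (1-q)^k * q^(n-k)))"
  proof (intro sum.cong refl)
    fix k
    have "real (Suc k) * real (Suc n choose Suc k) = real (Suc n) * real (n choose k)"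
      by (metis Suc_times_binomial of_nat_mult)
    then show "real (Suc k) * (real (Suc n choose Suc k) * (1-q)^(Suc k) * q^(Suc n- Suc k)) = real (Suc n) * (1-q) * (real (n choose k) * (1-q)^k * q^(n-k))"
      by (simp add: mult_ac)
  qed
  also have "\<dots> = real (Suc n) * (1-q)"
    by (simp only: sum_distrib_left[symmetric] binom_sum1)
  finally show ?thesis using Suc by simp
qed

lemma num_identity:
  fixes b :: "nat \<Rightarrow> real"
  shows "(\<Sum>k<K. (real N - real k) * b k) = (real N - real K) * (\<Sum>k<K. b k) + (\<Sum>h=1..K. \<Sum>k<h. b k)"
proof (induction K)
  case 0
  then show ?case by simp
next
  case (Suc K)
  have "(\<Sum>h=1..Suc K. \<Sum>k<h. b k) = (\<Sum>h=1..K. \<Sum>k<h. b k) + (\<Sum>k<Suc K. b k)"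
    by simp
  then show ?case using Suc by (simp add: algebra_simps)
qed

lemma W_identity:
  fixes b :: "nat \<Rightarrow> real"
  assumes "K \<le> m"
  shows "(\<Sum>h=K+1..m. \<Sum>k<h. b k) = (\<Sum>k<m. (real m - real (max k K)) * b k)"
  using assms
proof (induction m rule: dec_induct)
  case base
  show ?case by (auto intro!: sum.neutral)
next
  case (step m)
  have Km: "\<not> m < K" using step by auto
  have "(\<Sum>h=K+1..Suc m. \<Sum>k<h. b k) = (\<Sum>h=K+1..m. \<Sum>k<h. b k) + (\<Sum>k<Suc m. b k)"
    using Km by simp
  also have "\<dots> = (\<Sum>k<m. (real m - real (max k K)) * b k) + (\<Sum>k<m. b k) + b m"
    using step.IH by simp
  also have "\<dots> = (\<Sum>k<m. (real (Suc m) - real (max k K)) * b k) + (real (Suc m) - real (max m K)) * b m"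
  proof -
    show ?thesis using Km by (simp add: sum.distrib[symmetric] algebra_simps max_def)
  qed
  also have "\<dots> = (\<Sum>k<Suc m. (real (Suc m) - real (max k K)) * b k)" by simp
  finally show ?case .
qed

lemma den_identity:
  fixes b :: "nat \<Rightarrow> real" and q :: real
  assumes "K \<le> N" and s1: "(\<Sum>k\<le>N. b k) = 1" and sk: "(\<Sum>k\<le>N. real k * b k) = real N * (1 - q)"
  shows "(\<Sum>k\<le>N. (real N - real (min k K)) * b k)
       = real N * q + real (N - K) - (\<Sum>h=K+1..N. \<Sum>k<h. b k)"
proof -
  have W: "(\<Sum>h=K+1..N. \<Sum>k<h. b k) = (\<Sum>k\<le>N. (real N - real (max k K)) * b k)"
    using W_identity[OF assms(1), of b] assms(1) by (simp add: lessThan_Suc_atMost[symmetric] max_def)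
  have "(\<Sum>k\<le>N. (real N - real (min k K)) * b k)
      = (\<Sum>k\<le>N. real N * b k - real k * b k + (real N - real K) * b k - (real N - real (max k K)) * b k)"
    by (intro sum.cong refl) (simp add: algebra_simps min_def max_def)
  also have "\<dots> = real N * (\<Sum>k\<le>N. b k) - (\<Sum>k\<le>N. real k * b k) + (real N - real K) * (\<Sum>k\<le>N. b k) - (\<Sum>k\<le>N. (real N - real (max k K)) * b k)"
    by (simp add: sum_subtractf sum.distrib sum_distrib_left)
  finally show ?thesis using s1 sk W assms(1) by (simp add: of_nat_diff algebra_simps)
qed

locale ps_model = prob_space M for M :: "'a measure" +
  fixes T :: "nat \<Rightarrow> 'a \<Rightarrow> real" and N K :: nat and lam c TD :: real
  assumes N1: "N \<ge> 1" and K1: "1 \<le> K" and KN: "K \<le> N" and lam: "lam > 0" and cTD: "TD > c"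
    and rv: "\<And>i. i \<in> {1..N} \<Longrightarrow> T i \<in> borel_measurable M"
    and ind: "indep_vars (\<lambda>_. borel) T {1..N}"
    and cdfT: "\<And>i t. i \<in> {1..N} \<Longrightarrow> measure M {x \<in> space M. T i x \<le> t} = shexp_cdf lam c t"
begin

abbreviation "I \<equiv> {1..N}"
abbreviation "\<nu> \<equiv> distr M borel (T 1)"
abbreviation "PB \<equiv> Pi\<^sub>M {1..N} (\<lambda>_. borel :: real measure)"

lemma one_in_I: "1 \<in> I" using N1 by simp

lemma same_distr:
  assumes "i \<in> I" shows "distr M borel (T i) = \<nu>"
proof (rule cdf_unique)
  show "real_distribution (distr M borel (T i))" using rv[OF assms] by (rule real_distribution_distr)
  show "real_distribution \<nu>" using rv[OF one_in_I] by (rule real_distribution_distr)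
  show "cdf (distr M borel (T i)) = cdf \<nu>"
  proof
    fix t
    have "cdf (distr M borel (T i)) t = measure M {x \<in> space M. T i x \<le> t}"
      unfolding cdf_def using rv[OF assms] by (subst measure_distr) (auto intro!: arg_cong[where f="measure M"])
    also have "\<dots> = measure M {x \<in> space M. T 1 x \<le> t}" using cdfT[OF assms] cdfT[OF one_in_I] by simp
    also have "\<dots> = cdf \<nu> t"
      unfolding cdf_def using rv[OF one_in_I] by (subst measure_distr) (auto intro!: arg_cong[where f="measure M"])
    finally show "cdf (distr M borel (T i)) t = cdf \<nu> t" .
  qed
qed

lemma law: "distr M PB (\<lambda>\<omega>. \<lambda>i\<in>I. T i \<omega>) = Pi\<^sub>M I (\<lambda>_. \<nu>)"
proof -
  have "distr M PB (\<lambda>\<omega>. \<lambda>i\<in>I. T i \<omega>) = Pi\<^sub>M I (\<lambda>i. distr M borel (T i))"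
    using indep_vars_iff_distr_eq_PiM'[where I=I and M'="\<lambda>_. borel" and X=T] rv ind N1 by auto
  also have "\<dots> = Pi\<^sub>M I (\<lambda>_. \<nu>)"
    by (intro PiM_cong refl same_distr) 
  finally show ?thesis .
qed

lemma vec_meas: "(\<lambda>\<omega>. \<lambda>i\<in>I. T i \<omega>) \<in> measurable M PB"
  using rv by (intro measurable_restrict) auto

lemma exch:
  assumes \<sigma>: "bij_betw \<sigma> I I" and B: "B \<in> sets PB"
  shows "prob {\<omega>\<in>space M. (\<lambda>i\<in>I. T (\<sigma> i) \<omega>) \<in> B} = prob {\<omega>\<in>space M. (\<lambda>i\<in>I. T i \<omega>) \<in> B}"
proof -
  let ?vec = "\<lambda>\<omega>. \<lambda>i\<in>I. T i \<omega>"
  let ?g = "\<lambda>v. \<lambda>n\<in>I. v (\<sigma> n) :: real"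
  have sI: "\<And>n. n \<in> I \<Longrightarrow> \<sigma> n \<in> I" using \<sigma> by (auto simp: bij_betw_def)
  have g: "?g \<in> measurable PB PB"
    using sI by (intro measurable_restrict measurable_component_singleton) auto
  have pn: "prob_space \<nu>" using rv[OF one_in_I] by (rule prob_space_distr)
  have R: "distr (Pi\<^sub>M I (\<lambda>_. \<nu>)) (Pi\<^sub>M I (\<lambda>_. \<nu>)) ?g = Pi\<^sub>M I (\<lambda>_. \<nu>)"
    using distr_PiM_reindex[of I "\<lambda>_. \<nu>" \<sigma> I] pn \<sigma> sI by (auto simp: bij_betw_def)
  have sets_eq: "sets (Pi\<^sub>M I (\<lambda>_. \<nu>)) = sets PB" by (intro sets_PiM_cong) auto
  have sp_eq: "space (Pi\<^sub>M I (\<lambda>_. \<nu>)) = space PB" by (simp add: space_PiM)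
  have g': "?g \<in> measurable (Pi\<^sub>M I (\<lambda>_. \<nu>)) (Pi\<^sub>M I (\<lambda>_. \<nu>))"
    unfolding measurable_cong_sets[OF sets_eq sets_eq] by (rule g)
  have B': "B \<in> sets (Pi\<^sub>M I (\<lambda>_. \<nu>))" using B sets_eq by simp
  have gB: "?g -` B \<inter> space PB \<in> sets PB" using g B by (rule measurable_sets)
  have "{\<omega>\<in>space M. (\<lambda>i\<in>I. T (\<sigma> i) \<omega>) \<in> B} = ?vec -` (?g -` B \<inter> space PB) \<inter> space M"
  proof -
    have "\<And>\<omega>. ?g (?vec \<omega>) = (\<lambda>i\<in>I. T (\<sigma> i) \<omega>)" using sI by (auto simp: restrict_def fun_eq_iff)
    moreover have "\<And>\<omega>. \<omega> \<in> space M \<Longrightarrow> ?vec \<omega> \<in> space PB" using vec_meas by (auto simp: measurable_def)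
    ultimately show ?thesis by auto
  qed
  then have "prob {\<omega>\<in>space M. (\<lambda>i\<in>I. T (\<sigma> i) \<omega>) \<in> B} = measure (distr M PB ?vec) (?g -` B \<inter> space PB)"
    using vec_meas gB by (simp add: measure_distr)
  also have "\<dots> = measure (Pi\<^sub>M I (\<lambda>_. \<nu>)) (?g -` B \<inter> space (Pi\<^sub>M I (\<lambda>_. \<nu>)))"
    unfolding law sp_eq ..
  also have "\<dots> = measure (distr (Pi\<^sub>M I (\<lambda>_. \<nu>)) (Pi\<^sub>M I (\<lambda>_. \<nu>)) ?g) B"
    using g' B' by (simp add: measure_distr)
  also have "\<dots> = measure (distr M PB ?vec) B" unfolding R law ..
  also have "\<dots> = prob {\<omega>\<in>space M. ?vec \<omega> \<in> B}"
    using vec_meas B by (simp add: measure_distr vimage_def Int_def conj_commute)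
  finally show ?thesis .
qed

end

lemma shexp_lip:
  assumes "a \<le> b" "lam > 0"
  shows "shexp_cdf lam c b - shexp_cdf lam c a \<le> lam * (b - a)"
proof -
  have e1: "1 - exp (- t) \<le> t" for t :: real using exp_ge_add_one_self[of "-t"] by simp
  show ?thesis
  proof (cases "b \<le> c")
    case True
    then show ?thesis using assms by (simp add: shexp_cdf_def)
  next
    case False
    show ?thesis
    proof (cases "a \<le> c")
      case True
      have "shexp_cdf lam c b - shexp_cdf lam c a = 1 - exp (- (lam * (b - c)))"
        using True False by (simp add: shexp_cdf_def)
      also have "\<dots> \<le> lam * (b - c)" by (rule e1)
      also have "\<dots> \<le> lam * (b - a)" using True assms by (intro mult_left_mono) auto
      finally show ?thesis .
    next
      case False2: False
      have "shexp_cdf lam c b - shexp_cdf lam c a = exp (- lam * (a - c)) - exp (- lam * (b - c))"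
        using False False2 assms by (simp add: shexp_cdf_def)
      also have "\<dots> = exp (- lam * (a - c)) * (1 - exp (- (lam * (b - a))))"
        by (simp add: algebra_simps exp_add[symmetric])
      also have "\<dots> \<le> 1 * (lam * (b - a))"
      proof (rule mult_mono)
        show "exp (- lam * (a - c)) \<le> 1" using False2 assms by simp
        show "1 - exp (- (lam * (b - a))) \<le> lam * (b - a)" by (rule e1)
        show "0 \<le> (1::real)" by simp
        show "0 \<le> 1 - exp (- (lam * (b - a)))" using assms by simp
      qed
      finally show ?thesis by simp
    qed
  qed
qed

context ps_model begin

lemma nu_cdf: "measure \<nu> {..t} = shexp_cdf lam c t"
proof -
  have "measure \<nu> {..t} = measure M {x \<in> space M. T 1 x \<le> t}"
    using rv[OF one_in_I] by (subst measure_distr) (auto intro!: arg_cong[where f="measure M"])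
  then show ?thesis using cdfT[OF one_in_I] by simp
qed

lemma nu_atom: "measure \<nu> {x} = 0"
proof -
  interpret nu: prob_space \<nu> using rv[OF one_in_I] by (rule prob_space_distr)
  have "measure \<nu> {x} \<le> 0 + e" if e: "e > 0" for e
  proof -
    define d where "d = e / lam"
    have d: "d > 0" "lam * d = e" using e lam by (auto simp: d_def)
    have "measure \<nu> {x} \<le> measure \<nu> ({..x} - {..x-d})"
      using d by (intro nu.finite_measure_mono) auto
    also have "\<dots> = measure \<nu> {..x} - measure \<nu> {..x-d}"
      using d by (intro nu.finite_measure_Diff) auto
    also have "\<dots> = shexp_cdf lam c x - shexp_cdf lam c (x-d)" using nu_cdf[of x] nu_cdf[of "x-d"] by simp
    also have "\<dots> \<le> lam * (x - (x - d))" using d lam by (intro shexp_lip) auto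
    finally show ?thesis using d by simp
  qed
  then have "measure \<nu> {x} \<le> 0" by (rule field_le_epsilon)
  then show ?thesis by (simp add: measure_nonneg antisym)
qed

lemma no_tie:
  assumes ij: "i \<in> I" "j \<in> I" "i \<noteq> j"
  shows "prob {\<omega>\<in>space M. T i \<omega> = T j \<omega>} = 0"
proof -
  interpret nu: prob_space \<nu> using rv[OF one_in_I] by (rule prob_space_distr)
  have iv0: "indep_var (Pi\<^sub>M {i} (\<lambda>_. borel)) (\<lambda>\<omega>. restrict (\<lambda>k. T k \<omega>) {i}) (Pi\<^sub>M {j} (\<lambda>_. borel)) (\<lambda>\<omega>. restrict (\<lambda>k. T k \<omega>) {j})"
    using ij by (intro indep_var_restrict[OF ind]) auto
  have iv1: "indep_var borel ((\<lambda>f. f i) \<circ> (\<lambda>\<omega>. restrict (\<lambda>k. T k \<omega>) {i})) borel ((\<lambda>f. f j) \<circ> (\<lambda>\<omega>. restrict (\<lambda>k. T k \<omega>) {j}))"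
    by (rule indep_var_compose[OF iv0]) (auto intro: measurable_component_singleton)
  have cmp: "((\<lambda>f. f i) \<circ> (\<lambda>\<omega>. restrict (\<lambda>k. T k \<omega>) {i})) = T i" "((\<lambda>f. f j) \<circ> (\<lambda>\<omega>. restrict (\<lambda>k. T k \<omega>) {j})) = T j"
    by (auto simp: fun_eq_iff)
  have iv: "indep_var borel (T i) borel (T j)" using iv1 unfolding cmp .
  have joint: "\<nu> \<Otimes>\<^sub>M \<nu> = distr M (borel \<Otimes>\<^sub>M borel) (\<lambda>x. (T i x, T j x))"
    using iv unfolding indep_var_distribution_eq same_distr[OF ij(1)] same_distr[OF ij(2)] by simp
  define D where "D = {p \<in> space (borel \<Otimes>\<^sub>M borel). fst p = (snd p :: real)}"
  have D: "D \<in> sets (borel \<Otimes>\<^sub>M borel)" unfolding D_def by measurable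
  have pm: "(\<lambda>x. (T i x, T j x)) \<in> measurable M (borel \<Otimes>\<^sub>M borel)"
    using rv ij by measurable
  have "prob {\<omega>\<in>space M. T i \<omega> = T j \<omega>} = measure (distr M (borel \<Otimes>\<^sub>M borel) (\<lambda>x. (T i x, T j x))) D"
    using pm D by (subst measure_distr) (auto simp: D_def space_pair_measure intro!: arg_cong[where f="measure M"])
  also have "\<dots> = measure (\<nu> \<Otimes>\<^sub>M \<nu>) D" unfolding joint ..
  also have "\<dots> = 0"
  proof -
    have Ds: "D \<in> sets (\<nu> \<Otimes>\<^sub>M \<nu>)" using D by (simp add: sets_pair_measure_cong[of \<nu> borel \<nu> borel])
    have "emeasure (\<nu> \<Otimes>\<^sub>M \<nu>) D = (\<integral>\<^sup>+x. emeasure \<nu> (Pair x -` D) \<partial>\<nu>)"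
      by (rule nu.emeasure_pair_measure_alt[OF Ds])
    also have "\<dots> = (\<integral>\<^sup>+x. 0 \<partial>\<nu>)"
    proof (intro nn_integral_cong)
      fix x
      have "Pair x -` D = {x}" by (auto simp: D_def space_pair_measure)
      then show "emeasure \<nu> (Pair x -` D) = 0" using nu_atom[of x] using nu.emeasure_eq_measure[of "{x}"] by simp
    qed
    finally show ?thesis by (simp add: measure_def)
  qed
  finally show ?thesis .
qed

end

lemma sum_Pow_card:
  fixes f :: "nat \<Rightarrow> real"
  assumes "finite I"
  shows "(\<Sum>A\<in>Pow I. f (card A)) = (\<Sum>k\<le>card I. real (card I choose k) * f k)"
proof -
  have "(\<Sum>A\<in>Pow I. f (card A)) = (\<Sum>k\<le>card I. \<Sum>A\<in>{A. A \<in> Pow I \<and> card A = k}. f (card A))"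
    using assms by (intro sum.group[symmetric]) (auto intro: card_mono)
  also have "\<dots> = (\<Sum>k\<le>card I. real (card I choose k) * f k)"
  proof (intro sum.cong refl)
    fix k
    have "(\<Sum>A\<in>{A. A \<in> Pow I \<and> card A = k}. f (card A)) = (\<Sum>A\<in>{A. A \<subseteq> I \<and> card A = k}. f k)"
      by (intro sum.cong) auto
    also have "\<dots> = real (card {A. A \<subseteq> I \<and> card A = k}) * f k" by simp
    also have "\<dots> = real (card I choose k) * f k" using n_subsets[OF assms] by simp
    finally show "(\<Sum>A\<in>{A. A \<in> Pow I \<and> card A = k}. f (card A)) = real (card I choose k) * f k" .
  qed
  finally show ?thesis .
qed

context ps_model begin

abbreviation "pp \<equiv> shexp_cdf lam c TD"

lemma S_set_eq:
  assumes "A \<subseteq> I"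
  shows "{\<omega>\<in>space M. {i\<in>I. T i \<omega> \<le> TD} = A} = (\<Inter>i\<in>I. T i -` (if i \<in> A then {..TD} else {TD<..}) \<inter> space M)"
proof -
  have ne: "I \<noteq> {}" using N1 by auto
  show ?thesis using assms ne by (auto split: if_splits) (auto simp: not_le)
qed

lemma S_set_meas:
  assumes "A \<subseteq> I"
  shows "{\<omega>\<in>space M. {i\<in>I. T i \<omega> \<le> TD} = A} \<in> events"
  unfolding S_set_eq[OF assms] using N1 rv
  by (intro sets.finite_INT) (auto intro!: measurable_sets)

lemma prob_S:
  assumes "A \<subseteq> I"
  shows "prob {\<omega>\<in>space M. {i\<in>I. T i \<omega> \<le> TD} = A} = pp ^ card A * (1 - pp) ^ (N - card A)"
proof -
  have ne: "I \<noteq> {}" using N1 by auto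
  have "prob {\<omega>\<in>space M. {i\<in>I. T i \<omega> \<le> TD} = A} = (\<Prod>i\<in>I. prob (T i -` (if i \<in> A then {..TD} else {TD<..}) \<inter> space M))"
    unfolding S_set_eq[OF assms] using ne by (intro indep_varsD_finite[OF ind]) auto
  also have "\<dots> = (\<Prod>i\<in>I. if i \<in> A then pp else 1 - pp)"
  proof (intro prod.cong refl)
    fix i assume i: "i \<in> I"
    have e1: "prob (T i -` {..TD} \<inter> space M) = pp"
      using cdfT[OF i, of TD] by (simp add: vimage_def Int_def conj_commute)
    have ev: "T i -` {..TD} \<inter> space M \<in> events" using rv[OF i] by (intro measurable_sets) auto
    have "T i -` {TD<..} \<inter> space M = space M - (T i -` {..TD} \<inter> space M)" by auto
    then have e2: "prob (T i -` {TD<..} \<inter> space M) = 1 - pp"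
      using prob_compl[OF ev] e1 by simp
    show "prob (T i -` (if i \<in> A then {..TD} else {TD<..}) \<inter> space M) = (if i \<in> A then pp else 1 - pp)"
      using e1 e2 by simp
  qed
  also have "\<dots> = pp ^ card A * (1 - pp) ^ (N - card A)"
  proof -
    have "(\<Prod>i\<in>I. if i \<in> A then pp else 1 - pp) = (\<Prod>i\<in>I \<inter> {x. x \<in> A}. pp) * (\<Prod>i\<in>I \<inter> - {x. x \<in> A}. 1 - pp)"
      by (rule prod.If_cases) simp
    also have "I \<inter> {x. x \<in> A} = A" using assms by auto
    also have "I \<inter> - {x. x \<in> A} = I - A" by auto
    finally have e: "(\<Prod>i\<in>I. if i \<in> A then pp else 1 - pp) = (\<Prod>i\<in>A. pp) * (\<Prod>i\<in>I - A. 1 - pp)" .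
    have c: "card (I - A) = N - card A" using assms by (simp add: card_Diff_subset finite_subset)
    show ?thesis unfolding e using c by simp
  qed
  finally show ?thesis .
qed

lemma expect_S:
  fixes g :: "nat \<Rightarrow> real"
  shows "(\<integral>\<omega>. g (card {i\<in>I. T i \<omega> \<le> TD}) \<partial>M) = (\<Sum>k\<le>N. real (N choose k) * (g k * (pp ^ k * (1 - pp) ^ (N - k))))"
proof -
  let ?E = "\<lambda>A. {\<omega>\<in>space M. {i\<in>I. T i \<omega> \<le> TD} = A}"
  have "(\<integral>\<omega>. g (card {i\<in>I. T i \<omega> \<le> TD}) \<partial>M) = (\<integral>\<omega>. (\<Sum>A\<in>Pow I. g (card A) * indicator (?E A) \<omega>) \<partial>M)"
  proof (rule Bochner_Integration.integral_cong[OF refl])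
    fix \<omega> assume \<omega>: "\<omega> \<in> space M"
    have "(\<Sum>A\<in>Pow I. g (card A) * indicator (?E A) \<omega>) = (\<Sum>A\<in>Pow I. if {i\<in>I. T i \<omega> \<le> TD} = A then g (card A) else 0)"
      using \<omega> by (intro sum.cong refl) (auto simp: indicator_def)
    also have "\<dots> = g (card {i\<in>I. T i \<omega> \<le> TD})" by (subst sum.delta') auto
    finally show "g (card {i\<in>I. T i \<omega> \<le> TD}) = (\<Sum>A\<in>Pow I. g (card A) * indicator (?E A) \<omega>)" by simp
  qed
  also have "\<dots> = (\<Sum>A\<in>Pow I. (\<integral>\<omega>. g (card A) * indicator (?E A) \<omega> \<partial>M))"
    using S_set_meas by (intro Bochner_Integration.integral_sum integrable_mult_right integrable_real_indicator) (auto simp: emeasure_eq_measure)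
  also have "\<dots> = (\<Sum>A\<in>Pow I. g (card A) * (pp ^ card A * (1 - pp) ^ (N - card A)))"
  proof (intro sum.cong refl)
    fix A assume "A \<in> Pow I"
    then have A: "A \<subseteq> I" by auto
    have "(\<integral>\<omega>. g (card A) * indicator (?E A) \<omega> \<partial>M) = g (card A) * prob (?E A)"
      using S_set_meas[OF A] by simp
    then show "(\<integral>\<omega>. g (card A) * indicator (?E A) \<omega> \<partial>M) = g (card A) * (pp ^ card A * (1 - pp) ^ (N - card A))"
      using prob_S[OF A] by simp
  qed
  also have "\<dots> = (\<Sum>k\<le>N. real (N choose k) * (g k * (pp ^ k * (1 - pp) ^ (N - k))))"
    using sum_Pow_card[of I "\<lambda>k. g k * (pp ^ k * (1 - pp) ^ (N - k))"] by simp
  finally show ?thesis .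
qed

end

lemma card_as_sum:
  assumes "finite A"
  shows "real (card {i\<in>A. P i}) = (\<Sum>i\<in>A. if P i then 1 else 0)"
proof -
  have "(\<Sum>i\<in>A. if P i then 1 else (0::real)) = (\<Sum>i\<in>A \<inter> {x. P x}. 1) + (\<Sum>i\<in>A \<inter> - {x. P x}. 0)"
    using assms by (rule sum.If_cases)
  also have "A \<inter> {x. P x} = {i\<in>A. P i}" by auto
  finally show ?thesis by simp
qed

context ps_model begin

definition cntlt :: "(nat \<Rightarrow> real) \<Rightarrow> real \<Rightarrow> real" where
  "cntlt v a = (\<Sum>i\<in>I. if v i < a then 1 else 0)"
definition cntle :: "(nat \<Rightarrow> real) \<Rightarrow> real \<Rightarrow> real" where
  "cntle v a = (\<Sum>i\<in>I. if v i \<le> a then 1 else 0)"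

definition CFB :: "nat \<Rightarrow> (nat \<Rightarrow> real) set" where
  "CFB m = {v \<in> space PB. TD < v m \<or> real K \<le> cntlt v (v m)}"
definition ACFB :: "nat \<Rightarrow> (nat \<Rightarrow> real) set" where
  "ACFB m = {v \<in> space PB. TD < v m \<and> cntle v TD < real K}"

lemma CFB_meas: assumes "m \<in> I" shows "CFB m \<in> sets PB"
  unfolding CFB_def cntlt_def using assms by measurable

lemma ACFB_meas: assumes "m \<in> I" shows "ACFB m \<in> sets PB"
  unfolding ACFB_def cntle_def using assms by measurable

abbreviation "tvec \<equiv> \<lambda>\<omega>. \<lambda>i\<in>I. T i \<omega>"
abbreviation "OS \<omega> \<equiv> order_stat N (\<lambda>i. T i \<omega>) K"

lemma vec_space: "\<omega> \<in> space M \<Longrightarrow> tvec \<omega> \<in> space PB"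
  using vec_meas by (auto simp: measurable_def)

lemma vec_CFB:
  assumes "\<omega> \<in> space M" "m \<in> I"
  shows "tvec \<omega> \<in> CFB m \<longleftrightarrow> min TD (OS \<omega>) < T m \<omega>"
proof -
  have "cntlt (tvec \<omega>) (T m \<omega>) = real (card {i\<in>I. T i \<omega> < T m \<omega>})"
    unfolding cntlt_def by (subst card_as_sum) auto
  then show ?thesis unfolding CFB_def using vec_space[OF assms(1)] assms(2) CF_iff[OF K1 KN, of TD "\<lambda>i. T i \<omega>" "T m \<omega>"]
    by auto
qed

lemma vec_ACFB:
  assumes "\<omega> \<in> space M" "m \<in> I"
  shows "tvec \<omega> \<in> ACFB m \<longleftrightarrow> TD < OS \<omega> \<and> min TD (OS \<omega>) < T m \<omega>"
proof -
  have c: "cntle (tvec \<omega>) TD = real (card {i\<in>I. T i \<omega> \<le> TD})"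
    unfolding cntle_def by (subst card_as_sum) auto
  have a: "TD < OS \<omega> \<longleftrightarrow> card {i\<in>I. T i \<omega> \<le> TD} < K" by (rule A_iff[OF K1 KN])
  show ?thesis unfolding ACFB_def using vec_space[OF assms(1)] assms(2) c a
    by auto
qed

lemma ev_vec: "B \<in> sets PB \<Longrightarrow> {\<omega>\<in>space M. tvec \<omega> \<in> B} \<in> events"
  using measurable_sets[OF vec_meas] by (simp add: vimage_def Int_def conj_commute)

definition swp :: "nat \<Rightarrow> nat \<Rightarrow> nat \<Rightarrow> nat" where
  "swp a b i = (if i = a then b else if i = b then a else i)"

lemma swp_bij: "a \<in> I \<Longrightarrow> b \<in> I \<Longrightarrow> bij_betw (swp a b) I I"
  by (rule bij_betw_byWitness[where f'="swp a b"]) (auto simp: swp_def)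

lemma exch_CF:
  assumes n: "n \<in> I" and m: "m \<in> I"
  shows "prob {\<omega>\<in>space M. tvec \<omega> \<in> CFB m} = prob {\<omega>\<in>space M. tvec \<omega> \<in> CFB n}"
proof -
  let ?s = "swp m n"
  have bij: "bij_betw ?s I I" using swp_bij[OF m n] .
  have sI: "\<And>i. i \<in> I \<Longrightarrow> ?s i \<in> I" using n m by (auto simp: swp_def)
  have "{\<omega>\<in>space M. (\<lambda>i\<in>I. T (?s i) \<omega>) \<in> CFB m} = {\<omega>\<in>space M. tvec \<omega> \<in> CFB n}"
  proof (intro Collect_cong conj_cong refl)
    fix \<omega> assume \<omega>: "\<omega> \<in> space M"
    have sp: "(\<lambda>i\<in>I. T (?s i) \<omega>) \<in> space PB" by (simp add: space_PiM)
    have sm: "?s m = n" by (simp add: swp_def)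
    have "cntlt (\<lambda>i\<in>I. T (?s i) \<omega>) (T n \<omega>) = (\<Sum>i\<in>I. if T (?s i) \<omega> < T n \<omega> then 1 else 0)"
      unfolding cntlt_def by (intro sum.cong refl) auto
    also have "\<dots> = (\<Sum>i\<in>I. if T i \<omega> < T n \<omega> then 1 else 0)"
      by (rule sum.reindex_bij_betw[OF bij, where g="\<lambda>j. if T j \<omega> < T n \<omega> then 1 else 0"])
    also have "\<dots> = cntlt (tvec \<omega>) (tvec \<omega> n)" unfolding cntlt_def using n by (intro sum.cong refl) auto
    finally have e: "cntlt (\<lambda>i\<in>I. T (?s i) \<omega>) (T n \<omega>) = cntlt (tvec \<omega>) (tvec \<omega> n)" .
    show "(\<lambda>i\<in>I. T (?s i) \<omega>) \<in> CFB m \<longleftrightarrow> tvec \<omega> \<in> CFB n"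
      unfolding CFB_def using sp vec_space[OF \<omega>] e sm m n by auto
  qed
  moreover have "prob {\<omega>\<in>space M. (\<lambda>i\<in>I. T (?s i) \<omega>) \<in> CFB m} = prob {\<omega>\<in>space M. tvec \<omega> \<in> CFB m}"
    by (rule exch[OF bij CFB_meas[OF m]])
  ultimately show ?thesis by simp
qed

lemma exch_ACF:
  assumes n: "n \<in> I" and m: "m \<in> I"
  shows "prob {\<omega>\<in>space M. tvec \<omega> \<in> ACFB m} = prob {\<omega>\<in>space M. tvec \<omega> \<in> ACFB n}"
proof -
  let ?s = "swp m n"
  have bij: "bij_betw ?s I I" using swp_bij[OF m n] .
  have "{\<omega>\<in>space M. (\<lambda>i\<in>I. T (?s i) \<omega>) \<in> ACFB m} = {\<omega>\<in>space M. tvec \<omega> \<in> ACFB n}"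
  proof (intro Collect_cong conj_cong refl)
    fix \<omega> assume \<omega>: "\<omega> \<in> space M"
    have sp: "(\<lambda>i\<in>I. T (?s i) \<omega>) \<in> space PB" by (simp add: space_PiM)
    have sm: "?s m = n" by (simp add: swp_def)
    have "cntle (\<lambda>i\<in>I. T (?s i) \<omega>) TD = (\<Sum>i\<in>I. if T (?s i) \<omega> \<le> TD then 1 else 0)"
      unfolding cntle_def by (intro sum.cong refl) auto
    also have "\<dots> = (\<Sum>i\<in>I. if T i \<omega> \<le> TD then 1 else 0)"
      by (rule sum.reindex_bij_betw[OF bij, where g="\<lambda>j. if T j \<omega> \<le> TD then 1 else 0"])
    also have "\<dots> = cntle (tvec \<omega>) TD" unfolding cntle_def by (intro sum.cong refl) auto
    finally have e: "cntle (\<lambda>i\<in>I. T (?s i) \<omega>) TD = cntle (tvec \<omega>) TD" .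
    show "(\<lambda>i\<in>I. T (?s i) \<omega>) \<in> ACFB m \<longleftrightarrow> tvec \<omega> \<in> ACFB n"
      unfolding ACFB_def using sp vec_space[OF \<omega>] e sm m n by auto
  qed
  moreover have "prob {\<omega>\<in>space M. (\<lambda>i\<in>I. T (?s i) \<omega>) \<in> ACFB m} = prob {\<omega>\<in>space M. tvec \<omega> \<in> ACFB m}"
    by (rule exch[OF bij ACFB_meas[OF m]])
  ultimately show ?thesis by simp
qed

lemma sum_prob_card:
  assumes "\<And>m. m \<in> I \<Longrightarrow> B m \<in> sets PB"
  shows "(\<Sum>m\<in>I. prob {\<omega>\<in>space M. tvec \<omega> \<in> B m}) = (\<integral>\<omega>. real (card {m\<in>I. tvec \<omega> \<in> B m}) \<partial>M)"
proof -
  have "(\<integral>\<omega>. real (card {m\<in>I. tvec \<omega> \<in> B m}) \<partial>M) = (\<integral>\<omega>. (\<Sum>m\<in>I. indicator {\<omega>\<in>space M. tvec \<omega> \<in> B m} \<omega>) \<partial>M)"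
  proof (rule Bochner_Integration.integral_cong[OF refl])
    fix \<omega> assume \<omega>: "\<omega> \<in> space M"
    show "real (card {m\<in>I. tvec \<omega> \<in> B m}) = (\<Sum>m\<in>I. indicator {\<omega>\<in>space M. tvec \<omega> \<in> B m} \<omega>)"
    proof -
      have "real (card {m\<in>I. tvec \<omega> \<in> B m}) = (\<Sum>m\<in>I. if tvec \<omega> \<in> B m then 1 else 0)"
        by (rule card_as_sum) simp
      also have "\<dots> = (\<Sum>m\<in>I. indicator {\<omega>\<in>space M. tvec \<omega> \<in> B m} \<omega>)"
        using \<omega> by (intro sum.cong refl) (auto simp: indicator_def)
      finally show ?thesis .
    qed
  qed
  also have "\<dots> = (\<Sum>m\<in>I. (\<integral>\<omega>. indicator {\<omega>\<in>space M. tvec \<omega> \<in> B m} \<omega> \<partial>M))"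
    using ev_vec assms by (intro Bochner_Integration.integral_sum integrable_real_indicator) (auto simp: emeasure_eq_measure)
  also have "\<dots> = (\<Sum>m\<in>I. prob {\<omega>\<in>space M. tvec \<omega> \<in> B m})"
    using ev_vec assms by (intro sum.cong refl) simp
  finally show ?thesis by simp
qed

lemma AE_inj: "AE \<omega> in M. inj_on (\<lambda>i. T i \<omega>) I"
proof -
  have "AE \<omega> in M. \<forall>p\<in>I \<times> I. fst p \<noteq> snd p \<longrightarrow> T (fst p) \<omega> \<noteq> T (snd p) \<omega>"
  proof (rule AE_finite_allI)
    show "finite (I \<times> I)" by simp
    fix p assume p: "p \<in> I \<times> I"
    obtain i j where ij: "p = (i, j)" "i \<in> I" "j \<in> I" using p by auto
    show "AE \<omega> in M. fst p \<noteq> snd p \<longrightarrow> T (fst p) \<omega> \<noteq> T (snd p) \<omega>"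
    proof (cases "i = j")
      case True
      then show ?thesis using ij by simp
    next
      case False
      have ev: "{\<omega>\<in>space M. T i \<omega> = T j \<omega>} \<in> events" using rv[OF ij(2)] rv[OF ij(3)] by measurable
      have "{\<omega>\<in>space M. T i \<omega> = T j \<omega>} \<in> null_sets M"
        using no_tie[OF ij(2,3) False] ev by (intro null_setsI) (simp_all add: emeasure_eq_measure)
      then show ?thesis by (rule AE_I') (auto simp: ij)
    qed
  qed
  then show ?thesis
    by eventually_elim (auto simp: inj_on_def)
qed

lemma meas_card:
  assumes "\<And>i. i \<in> I \<Longrightarrow> {\<omega>\<in>space M. P i \<omega>} \<in> events"
  shows "(\<lambda>\<omega>. real (card {i\<in>I. P i \<omega>})) \<in> borel_measurable M"
proof -
  have m: "(\<lambda>\<omega>. \<Sum>i\<in>I. indicator {\<omega>\<in>space M. P i \<omega>} \<omega> :: real) \<in> borel_measurable M"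
    using assms by (intro borel_measurable_sum borel_measurable_indicator) auto
  have e: "\<And>\<omega>. \<omega> \<in> space M \<Longrightarrow> real (card {i\<in>I. P i \<omega>}) = (\<Sum>i\<in>I. indicator {\<omega>\<in>space M. P i \<omega>} \<omega>)"
  proof -
    fix \<omega> assume \<omega>: "\<omega> \<in> space M"
    have "real (card {i\<in>I. P i \<omega>}) = (\<Sum>i\<in>I. if P i \<omega> then 1 else 0)" by (rule card_as_sum) simp
    also have "\<dots> = (\<Sum>i\<in>I. indicator {\<omega>\<in>space M. P i \<omega>} \<omega>)"
      using \<omega> by (intro sum.cong refl) (auto simp: indicator_def)
    finally show "real (card {i\<in>I. P i \<omega>}) = (\<Sum>i\<in>I. indicator {\<omega>\<in>space M. P i \<omega>} \<omega>)" .
  qed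
  show ?thesis by (rule measurable_cong[THEN iffD2, OF e m])
qed

lemma EA:
  "(\<Sum>m\<in>I. prob {\<omega>\<in>space M. tvec \<omega> \<in> ACFB m})
    = (\<Sum>k\<le>N. real (N choose k) * (real (if k < K then N - k else 0) * (pp ^ k * (1 - pp) ^ (N - k))))"
proof -
  have "(\<Sum>m\<in>I. prob {\<omega>\<in>space M. tvec \<omega> \<in> ACFB m}) = (\<integral>\<omega>. real (card {m\<in>I. tvec \<omega> \<in> ACFB m}) \<partial>M)"
    using ACFB_meas by (rule sum_prob_card)
  also have "\<dots> = (\<integral>\<omega>. real (if card {i\<in>I. T i \<omega> \<le> TD} < K then N - card {i\<in>I. T i \<omega> \<le> TD} else 0) \<partial>M)"
  proof (rule Bochner_Integration.integral_cong[OF refl])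
    fix \<omega> assume \<omega>: "\<omega> \<in> space M"
    have "{m\<in>I. tvec \<omega> \<in> ACFB m} = {m\<in>I. TD < OS \<omega> \<and> min TD (OS \<omega>) < T m \<omega>}"
      using vec_ACFB[OF \<omega>] by auto
    then show "real (card {m\<in>I. tvec \<omega> \<in> ACFB m}) = real (if card {i\<in>I. T i \<omega> \<le> TD} < K then N - card {i\<in>I. T i \<omega> \<le> TD} else 0)"
      using count_ACF[OF K1 KN, of TD "\<lambda>i. T i \<omega>"] by simp
  qed
  also have "\<dots> = (\<Sum>k\<le>N. real (N choose k) * (real (if k < K then N - k else 0) * (pp ^ k * (1 - pp) ^ (N - k))))"
    by (rule expect_S)
  finally show ?thesis .
qed


lemma EC:
  "(\<Sum>m\<in>I. prob {\<omega>\<in>space M. tvec \<omega> \<in> CFB m})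
    = (\<Sum>k\<le>N. real (N choose k) * ((real N - real (min k K)) * (pp ^ k * (1 - pp) ^ (N - k))))"
proof -
  have "(\<Sum>m\<in>I. prob {\<omega>\<in>space M. tvec \<omega> \<in> CFB m}) = (\<integral>\<omega>. real (card {m\<in>I. tvec \<omega> \<in> CFB m}) \<partial>M)"
    using CFB_meas by (rule sum_prob_card)
  also have "\<dots> = (\<integral>\<omega>. real N - real (min (card {i\<in>I. T i \<omega> \<le> TD}) K) \<partial>M)"
  proof (rule integral_cong_AE)
    show "(\<lambda>\<omega>. real (card {m\<in>I. tvec \<omega> \<in> CFB m})) \<in> borel_measurable M"
    proof (rule meas_card)
      fix m assume m: "m \<in> I"
      show "{\<omega>\<in>space M. tvec \<omega> \<in> CFB m} \<in> events" by (rule ev_vec[OF CFB_meas[OF m]])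
    qed
    have "(\<lambda>\<omega>. real (card {i\<in>I. T i \<omega> \<le> TD})) \<in> borel_measurable M"
    proof (rule meas_card)
      fix i assume i: "i \<in> I"
      show "{\<omega>\<in>space M. T i \<omega> \<le> TD} \<in> events" using rv[OF i] by measurable
    qed
    then have "(\<lambda>\<omega>. real N - min (real (card {i\<in>I. T i \<omega> \<le> TD})) (real K)) \<in> borel_measurable M"
      by measurable
    then show "(\<lambda>\<omega>. real N - real (min (card {i\<in>I. T i \<omega> \<le> TD}) K)) \<in> borel_measurable M"
      unfolding of_nat_min .
    show "AE \<omega> in M. real (card {m\<in>I. tvec \<omega> \<in> CFB m}) = real N - real (min (card {i\<in>I. T i \<omega> \<le> TD}) K)"
      using AE_inj AE_space
    proof eventually_elim
      case (elim \<omega>)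
      have eq: "{m\<in>I. tvec \<omega> \<in> CFB m} = I - {m\<in>I. \<not> (min TD (OS \<omega>) < T m \<omega>)}"
        using vec_CFB[OF elim(2)] by auto
      have c1: "card {m\<in>I. \<not> (min TD (OS \<omega>) < T m \<omega>)} = min (card {i\<in>I. T i \<omega> \<le> TD}) K"
        by (rule count_notCF[OF K1 KN elim(1)])
      have c2: "card (I - {m\<in>I. \<not> (min TD (OS \<omega>) < T m \<omega>)}) = N - card {m\<in>I. \<not> (min TD (OS \<omega>) < T m \<omega>)}"
        by (subst card_Diff_subset) auto
      have c3: "min (card {i\<in>I. T i \<omega> \<le> TD}) K \<le> N" using KN by simp
      show ?case unfolding eq c2 c1 using c3 by (rule of_nat_diff)
    qed
  qed
  also have "\<dots> = (\<Sum>k\<le>N. real (N choose k) * ((real N - real (min k K)) * (pp ^ k * (1 - pp) ^ (N - k))))"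
    by (rule expect_S)
  finally show ?thesis .
qed

lemma main:
  assumes n: "n \<in> I"
  shows "cond_prob M (\<lambda>x. TD < order_stat N (\<lambda>i. T i x) K)
                     (\<lambda>x. T n x > min TD (order_stat N (\<lambda>i. T i x) K))
       = (real (N - K) * Zcoef N lam c TD K + (\<Sum>h = 1..K. Zcoef N lam c TD h))
         / (real N * exp (- lam * (TD - c)) + real (N - K) - (\<Sum>h = K+1..N. Zcoef N lam c TD h))"
proof -
  define q where "q = exp (- lam * (TD - c))"
  have pq: "pp = 1 - q" using cTD by (simp add: shexp_cdf_def q_def)
  define b where "b k = real (N choose k) * (1-q)^k * q^(N-k)" for k
  have Zb: "Zcoef N lam c TD h = (\<Sum>k<h. b k)" if "1 \<le> h" "h \<le> N" for h
    using Z_eq[OF that, of lam c TD] unfolding b_def q_def by simp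
  have cardI: "card I = N" by simp
  have sA: "(\<Sum>m\<in>I. prob {\<omega>\<in>space M. tvec \<omega> \<in> ACFB m}) = real N * prob {\<omega>\<in>space M. tvec \<omega> \<in> ACFB n}"
  proof -
    have "(\<Sum>m\<in>I. prob {\<omega>\<in>space M. tvec \<omega> \<in> ACFB m}) = (\<Sum>m\<in>I. prob {\<omega>\<in>space M. tvec \<omega> \<in> ACFB n})"
      using exch_ACF[OF n] by (intro sum.cong refl) auto
    then show ?thesis by simp
  qed
  have sC: "(\<Sum>m\<in>I. prob {\<omega>\<in>space M. tvec \<omega> \<in> CFB m}) = real N * prob {\<omega>\<in>space M. tvec \<omega> \<in> CFB n}"
  proof -
    have "(\<Sum>m\<in>I. prob {\<omega>\<in>space M. tvec \<omega> \<in> CFB m}) = (\<Sum>m\<in>I. prob {\<omega>\<in>space M. tvec \<omega> \<in> CFB n})"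
      using exch_CF[OF n] by (intro sum.cong refl) auto
    then show ?thesis by simp
  qed
  have num: "(\<Sum>k\<le>N. real (N choose k) * (real (if k < K then N - k else 0) * (pp ^ k * (1 - pp) ^ (N - k))))
     = real (N - K) * Zcoef N lam c TD K + (\<Sum>h = 1..K. Zcoef N lam c TD h)"
  proof -
    have "(\<Sum>k\<le>N. real (N choose k) * (real (if k < K then N - k else 0) * (pp ^ k * (1 - pp) ^ (N - k))))
        = (\<Sum>k\<le>N. if k < K then (real N - real k) * b k else 0)"
    proof (intro sum.cong refl)
      fix k assume "k \<in> {..N}"
      show "real (N choose k) * (real (if k < K then N - k else 0) * (pp ^ k * (1 - pp) ^ (N - k)))
          = (if k < K then (real N - real k) * b k else 0)"
        using KN by (auto simp: b_def pq of_nat_diff mult_ac)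
    qed
    also have "\<dots> = (\<Sum>k\<in>{k\<in>{..N}. k < K}. (real N - real k) * b k)"
      by (rule sum.inter_filter[symmetric]) simp
    also have "{k\<in>{..N}. k < K} = {..<K}" using KN by auto
    also have "(\<Sum>k<K. (real N - real k) * b k) = (real N - real K) * (\<Sum>k<K. b k) + (\<Sum>h=1..K. \<Sum>k<h. b k)"
      by (rule num_identity)
    also have "\<dots> = real (N - K) * Zcoef N lam c TD K + (\<Sum>h = 1..K. Zcoef N lam c TD h)"
    proof -
      have "(\<Sum>h=1..K. \<Sum>k<h. b k) = (\<Sum>h = 1..K. Zcoef N lam c TD h)"
        using KN by (intro sum.cong refl) (simp add: Zb)
      then show ?thesis using KN K1 Zb[of K] by (simp add: of_nat_diff)
    qed
    finally show ?thesis .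
  qed
  have den: "(\<Sum>k\<le>N. real (N choose k) * ((real N - real (min k K)) * (pp ^ k * (1 - pp) ^ (N - k))))
     = real N * exp (- lam * (TD - c)) + real (N - K) - (\<Sum>h = K+1..N. Zcoef N lam c TD h)"
  proof -
    have "(\<Sum>k\<le>N. real (N choose k) * ((real N - real (min k K)) * (pp ^ k * (1 - pp) ^ (N - k))))
        = (\<Sum>k\<le>N. (real N - real (min k K)) * b k)"
      by (intro sum.cong refl) (simp add: b_def pq mult_ac)
    also have "\<dots> = real N * q + real (N - K) - (\<Sum>h=K+1..N. \<Sum>k<h. b k)"
    proof (rule den_identity[OF KN])
      show "(\<Sum>k\<le>N. b k) = 1" unfolding b_def by (rule binom_sum1)
      show "(\<Sum>k\<le>N. real k * b k) = real N * (1 - q)" unfolding b_def by (rule binom_sumk)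
    qed
    also have "(\<Sum>h=K+1..N. \<Sum>k<h. b k) = (\<Sum>h = K+1..N. Zcoef N lam c TD h)"
      using K1 by (intro sum.cong refl) (simp add: Zb)
    finally show ?thesis unfolding q_def .
  qed
  have setA: "{x\<in>space M. TD < OS x \<and> min TD (OS x) < T n x} = {\<omega>\<in>space M. tvec \<omega> \<in> ACFB n}"
    using vec_ACFB[OF _ n] by auto
  have setC: "{x\<in>space M. min TD (OS x) < T n x} = {\<omega>\<in>space M. tvec \<omega> \<in> CFB n}"
    using vec_CFB[OF _ n] by auto
  have NA: "real N * prob {\<omega>\<in>space M. tvec \<omega> \<in> ACFB n} = real (N - K) * Zcoef N lam c TD K + (\<Sum>h = 1..K. Zcoef N lam c TD h)"
    using sA EA num by simp
  have NC: "real N * prob {\<omega>\<in>space M. tvec \<omega> \<in> CFB n} = real N * exp (- lam * (TD - c)) + real (N - K) - (\<Sum>h = K+1..N. Zcoef N lam c TD h)"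
    using sC EC den by simp
  have Npos: "real N \<noteq> 0" using N1 by simp
  have "cond_prob M (\<lambda>x. TD < OS x) (\<lambda>x. T n x > min TD (OS x))
      = prob {\<omega>\<in>space M. tvec \<omega> \<in> ACFB n} / prob {\<omega>\<in>space M. tvec \<omega> \<in> CFB n}"
    unfolding cond_prob_def setA[symmetric] setC[symmetric] by simp
  also have "\<dots> = (real N * prob {\<omega>\<in>space M. tvec \<omega> \<in> ACFB n}) / (real N * prob {\<omega>\<in>space M. tvec \<omega> \<in> CFB n})"
    using Npos by simp
  also have "\<dots> = (real (N - K) * Zcoef N lam c TD K + (\<Sum>h = 1..K. Zcoef N lam c TD h))
         / (real N * exp (- lam * (TD - c)) + real (N - K) - (\<Sum>h = K+1..N. Zcoef N lam c TD h))"
    unfolding NA NC ..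
  finally show ?thesis .
qed

end

theorem proposition2:
  fixes M :: "'a measure" and T :: "nat \<Rightarrow> 'a \<Rightarrow> real"
    and N K n :: nat and lam c TD :: real
  assumes "prob_space M"
    and "N \<ge> 1" and "1 \<le> K" and "K \<le> N"
    and "lam > 0" and "c > 0" and "TD > c"
    and "\<And>i. i \<in> {1..N} \<Longrightarrow> T i \<in> borel_measurable M"
    and "prob_space.indep_vars M (\<lambda>_. borel) T {1..N}"
    and "\<And>i t. i \<in> {1..N} \<Longrightarrow> measure M {x \<in> space M. T i x \<le> t} = shexp_cdf lam c t"
    and "n \<in> {1..N}"
  shows "cond_prob M (\<lambda>x. TD < order_stat N (\<lambda>i. T i x) K)
                     (\<lambda>x. T n x > min TD (order_stat N (\<lambda>i. T i x) K))
       = (real (N - K) * Zcoef N lam c TD K + (\<Sum>h = 1..K. Zcoef N lam c TD h))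
         / (real N * exp (- lam * (TD - c)) + real (N - K) - (\<Sum>h = K+1..N. Zcoef N lam c TD h))"
proof -
  have "ps_model M T N K lam c TD"
    unfolding ps_model_def ps_model_axioms_def using assms by auto
  then show ?thesis by (rule ps_model.main) (use assms in simp)
qed

end
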